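(* Let $H$ be a 0-SYM filter such that: - $\operatorname{sign}(H(i))=1$; - the set of solutions of $H(z)=1$ lying on the unit circle $\{|z|=1\}$ is exactly $\{1\}$. Then $H(e^{i\xi})>0$ for all $\xi\in(-\pi,\pi)$.
   Context: A 0-SYM filter is a rational function $H(z)$ with real coefficients satisfying $H(z)^2+H(-z)^2=1$ and $H(z)=H(z^{-1})$. For such $H$ one has $H(i)=\pm1/\sqrt2$. *)

theory Defs
  imports "HOL-Analysis.Analysis" "HOL-Computational_Algebra.Computational_Algebra"
begin

text \<open>A rational function with real coefficients is represented in lowest terms as p/q
  with real polynomials p, q, q nonzero and coprime; it is evaluated on complex numbers.\<close>

definition rat_eval :: "real poly \<Rightarrow> real poly \<Rightarrow> complex \<Rightarrow> complex" where
  "rat_eval p q z = poly (map_poly complex_of_real p) z / poly (map_poly complex_of_real q) z"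

text \<open>0-SYM filter: H(z)^2 + H(-z)^2 = 1 and H(z) = H(1/z) as identities of rational
  functions, i.e. at every point where all occurring denominators are nonzero.\<close>

definition zero_sym :: "real poly \<Rightarrow> real poly \<Rightarrow> bool" where
  "zero_sym p q \<longleftrightarrow> q \<noteq> 0 \<and> coprime p q \<and>
     (\<forall>z. poly (map_poly complex_of_real q) z \<noteq> 0 \<longrightarrow>
          poly (map_poly complex_of_real q) (-z) \<noteq> 0 \<longrightarrow>
          (rat_eval p q z)^2 + (rat_eval p q (-z))^2 = 1) \<and>
     (\<forall>z. z \<noteq> 0 \<longrightarrow> poly (map_poly complex_of_real q) z \<noteq> 0 \<longrightarrow>
          poly (map_poly complex_of_real q) (inverse z) \<noteq> 0 \<longrightarrow>
          rat_eval p q z = rat_eval p q (inverse z))"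

end

theory Submission
  imports Defs "HOL-Computational_Algebra.Field_as_Ring"
begin

lemma mp_mult: "map_poly (of_real::real\<Rightarrow>complex) (a*b) = map_poly of_real a * map_poly of_real b"
  by (rule poly_eqI) (simp add: coeff_map_poly coeff_mult)
lemma mp_add: "map_poly (of_real::real\<Rightarrow>complex) (a+b) = map_poly of_real a + map_poly of_real b"
  by (rule poly_eqI) (simp add: coeff_map_poly)
lemma mp_cnj: "poly (map_poly (of_real::real\<Rightarrow>complex) a) (cnj z) = cnj (poly (map_poly of_real a) z)"
  by (rule poly_cnj_real[symmetric]) (simp add: coeff_map_poly)
lemma mp_ne0: "a \<noteq> 0 \<Longrightarrow> map_poly (of_real::real\<Rightarrow>complex) a \<noteq> 0"
  by (simp add: map_poly_eq_0_iff)

lemma inv_circle: "cmod z = 1 \<Longrightarrow> inverse z = cnj z"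
proof -
  assume "cmod z = 1"
  hence "z * cnj z = 1" using complex_norm_square[of z] by simp
  thus ?thesis by (metis inverse_unique)
qed

lemma real_on_circle:
  assumes zs: "zero_sym p q" and c: "cmod z = 1"
    and nz: "poly (map_poly complex_of_real q) z \<noteq> 0"
  shows "cnj (rat_eval p q z) = rat_eval p q z"
proof -
  have z0: "z \<noteq> 0" using c by auto
  have inv: "inverse z = cnj z" using inv_circle[OF c] .
  have nz2: "poly (map_poly complex_of_real q) (inverse z) \<noteq> 0"
    using nz by (simp add: inv mp_cnj)
  have "rat_eval p q z = rat_eval p q (inverse z)"
    using zs z0 nz nz2 unfolding zero_sym_def by blast
  also have "\<dots> = cnj (rat_eval p q z)"
    by (simp add: inv rat_eval_def mp_cnj)
  finally show ?thesis by simp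
qed

lemma real_on_circle':
  assumes zs: "zero_sym p q" and c: "cmod z = 1"
    and nz: "poly (map_poly complex_of_real q) z \<noteq> 0"
  shows "Im (rat_eval p q z) = 0"
  using real_on_circle[OF assms] by (metis complex_cnj_cancel_iff complex_cnj_zero_iff cnj.sel(2) 
       complex.expand Im_complex_of_real Re_complex_of_real minus_equation_iff neg_equal_zero)

lemma bound_circle:
  assumes zs: "zero_sym p q" and c: "cmod z = 1"
    and nz: "poly (map_poly complex_of_real q) z \<noteq> 0"
    and nz': "poly (map_poly complex_of_real q) (-z) \<noteq> 0"
  shows "cmod (poly (map_poly complex_of_real p) z) \<le> cmod (poly (map_poly complex_of_real q) z)"
proof -
  let ?a = "rat_eval p q z" and ?b = "rat_eval p q (-z)"
  have ia: "Im ?a = 0" using real_on_circle'[OF zs c nz] .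
  have ib: "Im ?b = 0" using real_on_circle'[OF zs _ nz'] c by simp
  have "?a^2 + ?b^2 = 1" using zs nz nz' unfolding zero_sym_def by blast
  hence "Re (?a^2 + ?b^2) = 1" by simp
  hence "(Re ?a)^2 + (Re ?b)^2 = 1" using ia ib by (simp add: power2_eq_square)
  hence "(Re ?a)^2 \<le> 1" by (smt (verit) zero_le_power2)
  hence "\<bar>Re ?a\<bar> \<le> 1" by (simp add: abs_square_le_1)
  hence "cmod ?a \<le> 1" using ia by (simp add: cmod_eq_Re)
  hence "cmod (poly (map_poly complex_of_real p) z) / cmod (poly (map_poly complex_of_real q) z) \<le> 1"
    by (simp add: rat_eval_def norm_divide)
  thus ?thesis using nz by (simp add: divide_le_eq_1)
qed

lemma bound_all:
  assumes zs: "zero_sym p q" and c: "cmod w = 1"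
  shows "cmod (poly (map_poly complex_of_real p) w) \<le> cmod (poly (map_poly complex_of_real q) w)"
proof -
  let ?P = "poly (map_poly complex_of_real p)" and ?Q = "poly (map_poly complex_of_real q)"
  have q0: "map_poly complex_of_real q \<noteq> 0" using zs mp_ne0 unfolding zero_sym_def by blast
  define \<xi>0 where "\<xi>0 = Arg w"
  have "w \<noteq> 0" using c by auto
  hence w: "w = cis \<xi>0" using cis_Arg[of w] c unfolding \<xi>0_def by (simp add: sgn_div_norm)
  define Z where "Z = {z. ?Q z = 0} \<union> uminus -` {z. ?Q z = 0}"
  have "finite (uminus -` {z. ?Q z = 0})"
    by (rule finite_vimageI[OF poly_roots_finite[OF q0]]) (simp add: inj_def)
  hence fZ: "finite Z" unfolding Z_def using poly_roots_finite[OF q0] by blast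
  define g where "g t = cis (\<xi>0 + t)" for t
  have inj: "inj_on g {-1<..<1}"
  proof (rule inj_onI)
    fix a b assume a: "a \<in> {-1<..<(1::real)}" and b: "b \<in> {-1<..<(1::real)}" and e: "g a = g b"
    have "cis a = cis b"
      using arg_cong[OF e, of "\<lambda>x. x * cis (-\<xi>0)"] by (simp add: g_def cis_mult)
    hence "Arg (cis a) = Arg (cis b)" by simp
    moreover have "a \<in> {-pi<..pi}" "b \<in> {-pi<..pi}" using a b pi_gt3 by auto
    ultimately show "a = b" by (simp add: Arg_cis)
  qed
  define B where "B = g -` Z \<inter> {-1<..<1}"
  have fB: "finite B" unfolding B_def by (rule finite_vimage_IntI[OF fZ inj])
  have op: "open ({-1<..<1} - (B - {0}))"
    by (intro open_Diff finite_imp_closed) (use fB in auto)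
  have "eventually (\<lambda>t. t \<in> {-1<..<1} - (B - {0})) (nhds (0::real))"
    by (rule eventually_nhds_in_open[OF op]) auto
  hence ev: "eventually (\<lambda>t. t \<noteq> 0 \<and> t \<in> {-1<..<1} - B) (at (0::real))"
    unfolding eventually_at_filter by (rule eventually_mono) auto
  have ev2: "eventually (\<lambda>t. cmod (?P (g t)) - cmod (?Q (g t)) \<le> 0) (at (0::real))"
  proof (rule eventually_mono[OF ev])
    fix t :: real assume "t \<noteq> 0 \<and> t \<in> {-1<..<1} - B"
    hence "g t \<notin> Z" unfolding B_def by auto
    hence n1: "?Q (g t) \<noteq> 0" and n2: "?Q (- g t) \<noteq> 0" unfolding Z_def by auto
    have "cmod (g t) = 1" by (simp add: g_def)
    from bound_circle[OF zs this n1 n2] show "cmod (?P (g t)) - cmod (?Q (g t)) \<le> 0" by simp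
  qed
  have cont: "continuous_on UNIV (\<lambda>t. cmod (?P (g t)) - cmod (?Q (g t)))"
    unfolding g_def by (intro continuous_intros)
  hence "((\<lambda>t. cmod (?P (g t)) - cmod (?Q (g t))) \<longlongrightarrow> cmod (?P (g 0)) - cmod (?Q (g 0))) (at 0)"
    by (simp add: continuous_on_def)
  from tendsto_le[OF trivial_limit_at tendsto_const this ev2]
  show ?thesis by (simp add: g_def w)
qed

lemma no_root:
  assumes zs: "zero_sym p q" and c: "cmod w = 1"
  shows "poly (map_poly complex_of_real q) w \<noteq> 0"
proof
  assume Q: "poly (map_poly complex_of_real q) w = 0"
  hence P: "poly (map_poly complex_of_real p) w = 0" using bound_all[OF zs c] by simp
  have "coprime p q" using zs unfolding zero_sym_def by blast
  hence "gcd p q = 1" by simp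
  hence "fst (bezout_coefficients p q) * p + snd (bezout_coefficients p q) * q = 1"
    using bezout_coefficients_fst_snd by metis
  hence "poly (map_poly complex_of_real (fst (bezout_coefficients p q) * p + snd (bezout_coefficients p q) * q)) w = 1"
    by simp
  thus False by (simp add: mp_add mp_mult P Q)
qed

theorem proposition1:
  fixes p q :: "real poly"
  assumes "zero_sym p q"
    and "sgn (rat_eval p q \<i>) = 1"
    and "{z. cmod z = 1 \<and> rat_eval p q z = 1} = {1}"
  shows "\<forall>\<xi>::real. -pi < \<xi> \<and> \<xi> < pi \<longrightarrow>
           Im (rat_eval p q (cis \<xi>)) = 0 \<and> Re (rat_eval p q (cis \<xi>)) > 0"
proof -
  note zs = assms(1)
  let ?Q = "poly (map_poly complex_of_real q)"
  define G where "G t = Re (rat_eval p q (cis t))" for t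
  have nQ: "\<And>t. ?Q (cis t) \<noteq> 0" by (rule no_root[OF zs]) simp
  have nQ': "\<And>t. ?Q (- cis t) \<noteq> 0" by (rule no_root[OF zs]) simp
  have im0: "\<And>t. Im (rat_eval p q (cis t)) = 0"
    by (rule real_on_circle'[OF zs _ nQ]) simp
  have HG: "\<And>t. rat_eval p q (cis t) = complex_of_real (G t)"
    using im0 unfolding G_def by (simp add: complex_eq_iff)
  have contG: "continuous_on UNIV G"
    unfolding G_def rat_eval_def using nQ by (intro continuous_intros) auto
  have sq: "\<And>t. (G t)^2 + (G (t + pi))^2 = 1"
  proof -
    fix t
    have "(rat_eval p q (cis t))^2 + (rat_eval p q (- cis t))^2 = 1"
      using zs nQ nQ' unfolding zero_sym_def by blast
    hence "(complex_of_real (G t))^2 + (complex_of_real (G (t+pi)))^2 = 1"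
      by (simp add: HG minus_cis)
    hence "complex_of_real ((G t)^2 + (G (t+pi))^2) = complex_of_real 1" by simp
    thus "(G t)^2 + (G (t + pi))^2 = 1" using of_real_eq_iff by blast
  qed
  have one: "\<And>t. G t = 1 \<Longrightarrow> cis t = 1"
  proof -
    fix t assume "G t = 1"
    hence "cis t \<in> {z. cmod z = 1 \<and> rat_eval p q z = 1}" by (simp add: HG)
    thus "cis t = 1" using assms(3) by blast
  qed
  have ii: "\<i> = cis (pi/2)" by (simp add: complex_eq_iff)
  have mi: "- \<i> = cis (-pi/2)" by (simp add: complex_eq_iff)
  have Hinv: "rat_eval p q (inverse \<i>) = rat_eval p q \<i>"
    using zs nQ[of "pi/2"] unfolding zero_sym_def ii[symmetric]
    by (metis ii inv_circle norm_ii mp_cnj complex_cnj_zero_iff)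
  hence Gm: "G (-pi/2) = G (pi/2)" unfolding G_def by (simp add: ii[symmetric] mi[symmetric])
  have "sgn (rat_eval p q \<i>) = 1" by (rule assms(2))
  moreover have "rat_eval p q \<i> = complex_of_real (G (pi/2))" using HG[of "pi/2"] ii by simp
  ultimately have "sgn (complex_of_real (G (pi/2))) = 1" by simp
  hence Gpos: "G (pi/2) > 0"
    by (metis less_eq_real_def not_less_iff_gr_or_eq one_neq_zero sgn_0 sgn_of_real
        of_real_eq_1_iff sgn_neg neg_equal_zero zero_neq_neg_one)
  have "(G (-pi/2))^2 + (G (-pi/2 + pi))^2 = 1" by (rule sq)
  hence "2 * (G (pi/2))^2 = 1" using Gm by simp
  hence "(2 * G (pi/2))^2 = 2" by (simp add: power_mult_distrib)
  hence "1 < 2 * G (pi/2)" using Gpos power2_less_imp_less[of 1 "2 * G (pi/2)"] by simp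
  moreover have "-pi/2 + pi = pi/2" by simp
  ultimately have g0: "G (-pi/2) + G (-pi/2 + pi) > 1" using Gm by simp
  define g where "g t = G t + G (t + pi)" for t
  have contg: "continuous_on UNIV g" unfolding g_def
    by (intro continuous_intros continuous_on_compose2[OF contG]) auto
  have gne: "g t \<noteq> 1" if t: "-pi < t" "t < 0" for t
  proof
    assume "g t = 1"
    hence "G t + G (t+pi) = 1" by (simp add: g_def)
    moreover have "(G t)^2 + (G (t + pi))^2 = 1" by (rule sq)
    ultimately have "(G t)^2 + (1 - G t)^2 = 1"
      by (metis add_diff_cancel_left')
    hence "G t * (G t - 1) = 0" by algebra
    hence "G t = 1 \<or> G (t + pi) = 1" using \<open>G t + G (t+pi) = 1\<close> by auto
    moreover have "sin t < 0" using sin_gt_zero[of "-t"] t by simp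
    moreover have "sin (t + pi) > 0" using sin_gt_zero[of "t + pi"] t by simp
    ultimately show False
    proof (elim disjE)
      assume "G t = 1" hence "cis t = 1" by (rule one)
      hence "Im (cis t) = 0" by simp
      hence "sin t = 0" by simp
      thus False using \<open>sin t < 0\<close> by simp
    next
      assume "G (t+pi) = 1" hence "cis (t+pi) = 1" by (rule one)
      hence "Im (cis (t+pi)) = 0" by simp
      hence "sin (t+pi) = 0" by simp
      thus False using \<open>sin (t+pi) > 0\<close> by simp
    qed
  qed
  have gt: "g t > 1" if t: "-pi < t" "t < 0" for t
  proof (rule ccontr)
    assume "\<not> g t > 1"
    hence le: "g t \<le> 1" by simp
    have gm: "g (-pi/2) > 1" using g0 by (simp add: g_def)
    show False
    proof (cases "t \<le> -pi/2")
      case True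
      obtain x where "t \<le> x" "x \<le> -pi/2" "g x = 1"
        using IVT'[of g t 1 "-pi/2"] le gm True continuous_on_subset[OF contg] by force
      hence "-pi < x" "x < 0" using t pi_gt_zero by linarith+
      thus False using gne \<open>g x = 1\<close> by blast
    next
      case False
      obtain x where "-pi/2 \<le> x" "x \<le> t" "g x = 1"
        using IVT2'[of g t 1 "-pi/2"] le gm False continuous_on_subset[OF contg] by force
      hence "-pi < x" "x < 0" using t pi_gt_zero by linarith+
      thus False using gne \<open>g x = 1\<close> by blast
    qed
  qed
  have both: "G t > 0 \<and> G (t + pi) > 0" if t: "-pi < t" "t < 0" for t
  proof -
    have s: "G t + G (t + pi) > 1" using gt[OF t] by (simp add: g_def)
    have "(G t)^2 + (G (t + pi))^2 = 1" by (rule sq)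
    hence "(G t)^2 \<le> 1" "(G (t+pi))^2 \<le> 1" by (smt (verit) zero_le_power2)+
    hence "G t \<le> 1" "G (t+pi) \<le> 1" by (simp_all add: abs_square_le_1)
    thus ?thesis using s by linarith
  qed
  show ?thesis
  proof (intro allI impI conjI)
    fix \<xi> :: real assume x: "-pi < \<xi> \<and> \<xi> < pi"
    show "Im (rat_eval p q (cis \<xi>)) = 0" by (rule im0)
    have "G \<xi> > 0"
    proof (cases "\<xi> < 0")
      case True thus ?thesis using both x by blast
    next
      case False
      show ?thesis
      proof (cases "\<xi> = 0")
        case True
        have "1 \<in> {z. cmod z = 1 \<and> rat_eval p q z = 1}" using assms(3) by blast
        thus ?thesis using True by (simp add: G_def)
      next
        case False
        hence "-pi < \<xi> - pi" "\<xi> - pi < 0" using x \<open>\<not> \<xi> < 0\<close> by auto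
        from both[OF this] show ?thesis by simp
      qed
    qed
    thus "Re (rat_eval p q (cis \<xi>)) > 0" by (simp add: G_def)
  qed
qed

end
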